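(* Let $H\in\mathbb{R}^{n\times d}$ have rank $h$, $\Sigma\in\mathbb{R}^{n\times n}$ symmetric positive definite, $\Gamma_0$ the empirical covariance of an initial ensemble, $G_0=\Gamma_0$, $\widetilde{\mathbb{M}}_i=(I+G_iH^\top\Sigma^{-1}H)^{-1}$, $G_{i+1}=\widetilde{\mathbb{M}}_iG_i$. With $\widetilde{\mathbb{P}},\widetilde{\mathbb{Q}},\widetilde{\mathbb{N}}$ as in the context, for every $i\ge0$ these are spectral projectors of $\widetilde{\mathbb{M}}_i$: each commutes with $\widetilde{\mathbb{M}}_i$ and is idempotent, their pairwise products are zero, and $\widetilde{\mathbb{P}}+\widetilde{\mathbb{Q}}+\widetilde{\mathbb{N}}=I$.
   Context: $H^+=(H^\top\Sigma^{-1}H)^\dagger H^\top\Sigma^{-1}$. $\Gamma_0=\frac1{J-1}\sum_j(v_0^{(j)}-\bar v_0)(v_0^{(j)}-\bar v_0)^\top$. Let $C_i=HG_iH^\top$, $r$ the number of positive eigenvalues of $(C_0,\Sigma)$, and $\tilde w_1,\dots,\tilde w_n$ a basis of $\mathbb{R}^n$ with $\tilde w_k^\top\Sigma\tilde w_l$ equal to $1$ if $k=l$, $0$ otherwise, each a generalized eigenvector of $(C_i,\Sigma)$ for every $i$ with eigenvalue $\tilde\delta_{\ell,i}$, where $\tilde w_1,\dots,\tilde w_r\in\mathsf{Ran}(\Sigma^{-1}H)$ have positive eigenvalues, $\tilde w_{r+1},\dots,\tilde w_h\in\mathsf{Ran}(\Sigma^{-1}H)$ eigenvalue zero, $\tilde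 w_{h+1},\dots,\tilde w_n\in\mathsf{Ker}(H^\top)$. Let $\tilde u_\ell=\frac1{\tilde\delta_{\ell,0}}G_0H^\top\tilde w_\ell$ ($\ell\le r$), $\tilde u_\ell=H^+\Sigma\tilde w_\ell$ ($r<\ell\le h$), $\widetilde U=[\tilde u_1,\dots,\tilde u_h]$, $\widetilde U_{k:l}$ its columns $k$ through $l$. $\widetilde{\mathbb{P}}=\widetilde U_{1:r}\widetilde U_{1:r}^\top H^\top\Sigma^{-1}H$, $\widetilde{\mathbb{Q}}=\widetilde U_{r+1:h}\widetilde U_{r+1:h}^\top H^\top\Sigma^{-1}H$, $\widetilde{\mathbb{N}}=I-\widetilde{\mathbb{P}}-\widetilde{\mathbb{Q}}$. *)

theory Defs
  imports "HOL-Analysis.Analysis"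
begin

definition outer :: "real^'m \<Rightarrow> real^'k \<Rightarrow> real^'k^'m" where
  "outer u v = (\<chi> i j. u $ i * v $ j)"

definition pinv :: "real^'n^'m \<Rightarrow> real^'m^'n" where
  "pinv A = (THE X. A ** X ** A = A \<and> X ** A ** X = X \<and>
                    transpose (A ** X) = A ** X \<and> transpose (X ** A) = X ** A)"

definition spd :: "real^'n^'n \<Rightarrow> bool" where
  "spd S \<longleftrightarrow> transpose S = S \<and> (\<forall>x. x \<noteq> 0 \<longrightarrow> x \<bullet> (S *v x) > 0)"

definition ens_mean :: "nat \<Rightarrow> (nat \<Rightarrow> real^'d) \<Rightarrow> real^'d" where
  "ens_mean J v = (1 / real J) *\<^sub>R (\<Sum>j<J. v j)"

definition emp_cov :: "nat \<Rightarrow> (nat \<Rightarrow> real^'d) \<Rightarrow> real^'d^'d" where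
  "emp_cov J v = (1 / (real J - 1)) *\<^sub>R
     (\<Sum>j<J. outer (v j - ens_mean J v) (v j - ens_mean J v))"

definition Mmat :: "real^'d^'n \<Rightarrow> real^'n^'n \<Rightarrow> real^'d^'d \<Rightarrow> real^'d^'d" where
  "Mmat H S G = matrix_inv (mat 1 + G ** transpose H ** matrix_inv S ** H)"

primrec Gseq :: "real^'d^'n \<Rightarrow> real^'n^'n \<Rightarrow> real^'d^'d \<Rightarrow> nat \<Rightarrow> real^'d^'d" where
  "Gseq H S G0 0 = G0"
| "Gseq H S G0 (Suc i) = Mmat H S (Gseq H S G0 i) ** Gseq H S G0 i"

end

theory Submission
  imports Defs
begin
lemma inv_of_ker:
  fixes K :: "real^'n^'n"
  assumes "\<And>x. K *v x = 0 \<Longrightarrow> x = 0"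
  shows "K ** matrix_inv K = mat 1" "matrix_inv K ** K = mat 1"
proof -
  obtain B where B: "B ** K = mat 1" using matrix_left_invertible_ker[of K] assms by blast
  then have "K ** B = mat 1" using matrix_left_right_inverse by blast
  then have ex: "\<exists>A'. K ** A' = mat 1 \<and> A' ** K = mat 1" using B by blast
  show "K ** matrix_inv K = mat 1" "matrix_inv K ** K = mat 1"
    using someI_ex[OF ex] unfolding matrix_inv_def by auto
qed

lemma dot_transp: "(x::real^'n) \<bullet> (A *v y) = (transpose A *v x) \<bullet> y"
  by (simp add: dot_lmul_matrix[symmetric])

lemma sym_dot: "transpose G = G \<Longrightarrow> (x::real^'n) \<bullet> (G *v y) = (G *v x) \<bullet> y"
  by (metis dot_transp)

lemma outer_mv: "outer u v *v y = (v \<bullet> y) *\<^sub>R (u::real^'m)"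
  by (simp add: vec_eq_iff outer_def matrix_vector_mult_def inner_vec_def sum_distrib_left mult_ac)

lemma sum_mv: "(\<Sum>l\<in>I. M l) *v (y::real^'n) = (\<Sum>l\<in>I. (M l :: real^'n^'m) *v y)"
proof (cases "finite I")
  case True then show ?thesis
    by (induction I rule: finite_induct) (auto simp: matrix_vector_mult_add_rdistrib)
next
  case False then show ?thesis by (simp add: matrix_vector_mult_def vec_eq_iff)
qed

lemma proj_mv:
  fixes A :: "real^'d^'d"
  assumes "transpose A = A"
  shows "((\<Sum>l\<in>I. outer (u l) (u l)) ** A) *v x = (\<Sum>l\<in>I. ((A *v u l) \<bullet> x) *\<^sub>R u l)"
  by (simp add: matrix_vector_mul_assoc[symmetric] sum_mv outer_mv sym_dot[OF assms])


lemma mm_add_rdistrib: "((A::real^'n^'m) + B) ** (C::real^'p^'n) = A ** C + B ** C"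
  by (vector matrix_matrix_mult_def sum.distrib[symmetric] field_simps)
lemma mm_diff_rdistrib: "((A::real^'n^'m) - B) ** (C::real^'p^'n) = A ** C - B ** C"
  by (vector matrix_matrix_mult_def sum_subtractf[symmetric] field_simps)
lemma mm_diff_ldistrib: "(C::real^'m^'p) ** ((A::real^'n^'m) - B) = C ** A - C ** B"
  by (vector matrix_matrix_mult_def sum_subtractf[symmetric] field_simps)
lemma transpose_add': "transpose ((A::real^'n^'m) + B) = transpose A + transpose B"
  by (simp add: transpose_def vec_eq_iff)
lemma transpose_diff': "transpose ((A::real^'n^'m) - B) = transpose A - transpose B"
  by (simp add: transpose_def vec_eq_iff)

lemma pinv_unique:
  fixes A :: "real^'n^'m"
  assumes "A ** X ** A = A" "X ** A ** X = X" "transpose (A ** X) = A ** X" "transpose (X ** A) = X ** A"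
    and "A ** Y ** A = A" "Y ** A ** Y = Y" "transpose (A ** Y) = A ** Y" "transpose (Y ** A) = Y ** A"
  shows "X = Y"
proof -
  have AXAY: "A ** X = A ** Y"
  proof -
    have "A ** X = transpose (A ** X)" using assms by simp
    also have "\<dots> = transpose (A ** Y ** A ** X)" using assms(5) by simp
    also have "\<dots> = transpose (A ** X) ** transpose (A ** Y)"
      by (simp add: matrix_transpose_mul matrix_mul_assoc)
    also have "\<dots> = A ** X ** A ** Y" using assms by (simp add: matrix_mul_assoc)
    also have "\<dots> = A ** Y" using assms(1) by simp
    finally show ?thesis .
  qed
  have XAYA: "X ** A = Y ** A"
  proof -
    have "X ** A = transpose (X ** A)" using assms by simp
    also have "\<dots> = transpose (X ** A ** Y ** A)" using assms(5) by (metis matrix_mul_assoc)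
    also have "\<dots> = transpose (Y ** A) ** transpose (X ** A)"
      by (simp add: matrix_transpose_mul matrix_mul_assoc)
    also have "\<dots> = Y ** A ** X ** A" using assms by (simp add: matrix_mul_assoc)
    also have "\<dots> = Y ** A" using assms(1) by (metis matrix_mul_assoc)
    finally show ?thesis .
  qed
  have "X = X ** A ** X" using assms by simp
  also have "\<dots> = Y ** A ** Y" using AXAY XAYA by (metis matrix_mul_assoc)
  also have "\<dots> = Y" using assms by simp
  finally show ?thesis .
qed

lemma pinv_exists_sym:
  fixes A :: "real^'d^'d"
  assumes sym: "transpose A = A" and psd: "\<And>x. 0 \<le> x \<bullet> (A *v x)"
    and ker: "\<And>x. x \<bullet> (A *v x) = 0 \<Longrightarrow> A *v x = 0"
  shows "\<exists>X. A ** X ** A = A \<and> X ** A ** X = X \<and>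
                    transpose (A ** X) = A ** X \<and> transpose (X ** A) = X ** A"
proof -
  have sub: "subspace {x. A *v x = 0}"
    by (auto simp: subspace_def algebra_simps)
  obtain B where BS: "B \<subseteq> {x. A *v x = 0}" and orth: "pairwise orthogonal B"
    and n1: "\<And>x. x \<in> B \<Longrightarrow> norm x = 1" and ind: "independent B" and spB: "span B = {x. A *v x = 0}"
    using orthonormal_basis_subspace[OF sub] by metis
  have finB: "finite B" using ind independent_imp_finite by blast
  have bb: "b \<bullet> b' = (if b = b' then 1 else 0)" if "b \<in> B" "b' \<in> B" for b b'
    using orth that n1[OF that(1)] unfolding pairwise_def orthogonal_def
    by (auto simp: norm_eq_1)
  define Pk where "Pk = (\<Sum>b\<in>B. outer b b)"
  have Pk_mv: "Pk *v x = (\<Sum>b\<in>B. (b \<bullet> x) *\<^sub>R b)" for x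
    by (simp add: Pk_def sum_mv outer_mv)
  have Pk_sym: "transpose Pk = Pk"
    by (simp add: Pk_def transpose_def outer_def vec_eq_iff sum_component mult.commute)
  have Ab: "A *v b = 0" if "b \<in> B" for b using BS that by auto
  have APk: "A ** Pk = 0"
    by (simp add: matrix_eq matrix_vector_mul_assoc[symmetric] Pk_mv
        linear_sum[OF matrix_vector_mul_linear] o_def matrix_vector_mult_scaleR Ab)
  have PkA: "Pk ** A = 0"
  proof -
    have "b \<bullet> (A *v x) = 0" if "b \<in> B" for b x
      using sym_dot[OF sym, of b x] Ab[OF that] by simp
    then show ?thesis
      by (simp add: matrix_eq matrix_vector_mul_assoc[symmetric] Pk_mv)
  qed
  have PkPk: "Pk ** Pk = Pk"
  proof -
    have "b \<bullet> (Pk *v x) = b \<bullet> x" if "b \<in> B" for b x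
    proof -
      have "b \<bullet> (Pk *v x) = (\<Sum>b'\<in>B. (b' \<bullet> x) * (b \<bullet> b'))"
        by (simp add: Pk_mv inner_sum_right)
      also have "\<dots> = (\<Sum>b'\<in>B. if b' = b then b' \<bullet> x else 0)"
        by (rule sum.cong) (auto simp: bb that)
      also have "\<dots> = b \<bullet> x" using finB that by simp
      finally show ?thesis .
    qed
    then show ?thesis
      by (simp add: matrix_eq matrix_vector_mul_assoc[symmetric] Pk_mv)
  qed
  define Bm where "Bm = A + Pk"
  have Bm_inj: "x = 0" if "Bm *v x = 0" for x
  proof -
    have q: "x \<bullet> (Pk *v x) = (\<Sum>b\<in>B. (b \<bullet> x)^2)"
      by (simp add: Pk_mv inner_sum_right power2_eq_square inner_commute)
    have q0: "0 \<le> x \<bullet> (Pk *v x)" unfolding q by (simp add: sum_nonneg)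
    have "x \<bullet> (Bm *v x) = x \<bullet> (A *v x) + x \<bullet> (Pk *v x)"
      by (simp add: Bm_def matrix_vector_mult_add_rdistrib inner_add_right)
    then have s: "x \<bullet> (A *v x) + x \<bullet> (Pk *v x) = 0" using that by simp
    then have "x \<bullet> (A *v x) = 0" using psd[of x] q0 by linarith
    then have "A *v x = 0" by (rule ker)
    then have xk: "x \<in> span B" using spB by simp
    have "x \<bullet> (Pk *v x) = 0" using s psd[of x] q0 by linarith
    then have "\<forall>b\<in>B. (b \<bullet> x)^2 = 0" using q finB by (simp add: sum_nonneg_eq_0_iff)
    then have "\<forall>b\<in>B. orthogonal x b" by (simp add: orthogonal_def inner_commute)
    then have "orthogonal x x" using orthogonal_to_span[OF xk] by blast
    then show "x = 0" by (simp add: orthogonal_def)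
  qed
  define Bi where "Bi = matrix_inv Bm"
  have BBi: "Bm ** Bi = mat 1" "Bi ** Bm = mat 1" using inv_of_ker[of Bm] Bm_inj Bi_def by auto
  have PkBm: "Pk ** Bm = Pk" by (simp add: Bm_def matrix_add_ldistrib PkA PkPk)
  have BmPk: "Bm ** Pk = Pk" unfolding Bm_def mm_add_rdistrib APk PkPk by simp
  have PkBi: "Pk ** Bi = Pk" by (metis PkBm BBi(1) matrix_mul_assoc matrix_mul_rid)
  have BiPk: "Bi ** Pk = Pk" by (metis BmPk BBi(2) matrix_mul_assoc matrix_mul_lid)
  have ABm: "A = Bm - Pk" by (simp add: Bm_def)
  define X where "X = Bi - Pk"
  have AX: "A ** X = mat 1 - Pk"
  proof -
    have "A ** X = A ** Bi" by (simp add: X_def mm_diff_ldistrib APk)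
    also have "\<dots> = (Bm - Pk) ** Bi" using ABm by simp
    also have "\<dots> = mat 1 - Pk" by (simp add: mm_diff_rdistrib BBi PkBi)
    finally show ?thesis .
  qed
  have XA: "X ** A = mat 1 - Pk"
  proof -
    have "X ** A = Bi ** A" by (simp add: X_def mm_diff_rdistrib PkA)
    also have "\<dots> = Bi ** (Bm - Pk)" using ABm by simp
    also have "\<dots> = mat 1 - Pk" by (simp add: mm_diff_ldistrib BBi BiPk)
    finally show ?thesis .
  qed
  have "A ** X ** A = A" by (simp add: AX mm_diff_rdistrib PkA)
  moreover have "X ** A ** X = X"
    by (simp add: XA mm_diff_rdistrib) (simp add: X_def mm_diff_ldistrib PkBi PkPk)
  moreover have "transpose (A ** X) = A ** X" by (simp add: AX transpose_diff' Pk_sym)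
  moreover have "transpose (X ** A) = X ** A" by (simp add: XA transpose_diff' Pk_sym)
  ultimately show ?thesis by blast
qed

lemma pinv_sym:
  fixes A :: "real^'d^'d"
  assumes sym: "transpose A = A" and psd: "\<And>x. 0 \<le> x \<bullet> (A *v x)"
    and ker: "\<And>x. x \<bullet> (A *v x) = 0 \<Longrightarrow> A *v x = 0"
  shows "A ** pinv A ** A = A"
proof -
  obtain X where X: "A ** X ** A = A \<and> X ** A ** X = X \<and>
                    transpose (A ** X) = A ** X \<and> transpose (X ** A) = X ** A"
    using pinv_exists_sym[OF assms] by blast
  have "pinv A = X" unfolding pinv_def
    by (rule the_equality) (use X pinv_unique in blast)+
  then show ?thesis using X by simp
qed

lemma spd_inj: "spd S \<Longrightarrow> S *v x = 0 \<Longrightarrow> x = 0"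
  unfolding spd_def by (metis inner_zero_right less_irrefl)

lemma spd_inv:
  assumes "spd S"
  shows "S ** matrix_inv S = mat 1" "matrix_inv S ** S = mat 1"
  using inv_of_ker[of S] spd_inj[OF assms] by auto

lemma spd_inv_sym:
  assumes "spd S" shows "transpose (matrix_inv S) = matrix_inv S"
proof -
  have St: "transpose S = S" using assms spd_def by blast
  have "transpose (matrix_inv S) ** S = mat 1"
    using spd_inv(1)[OF assms] by (metis St matrix_transpose_mul transpose_mat)
  then have "transpose (matrix_inv S) = transpose (matrix_inv S) ** (S ** matrix_inv S)"
    using spd_inv(1)[OF assms] by simp
  also have "\<dots> = matrix_inv S" using \<open>transpose (matrix_inv S) ** S = mat 1\<close>
    by (simp add: matrix_mul_assoc)
  finally show ?thesis .
qed

lemma spd_inv_pos: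
  assumes "spd S"
  shows "0 \<le> z \<bullet> (matrix_inv S *v z)" "z \<bullet> (matrix_inv S *v z) = 0 \<Longrightarrow> z = 0"
proof -
  define y where "y = matrix_inv S *v z"
  have zy: "z = S *v y" using spd_inv(1)[OF assms] by (simp add: y_def matrix_vector_mul_assoc)
  have St: "transpose S = S" using assms spd_def by blast
  have e: "z \<bullet> (matrix_inv S *v z) = y \<bullet> (S *v y)"
    using sym_dot[OF St, of y y] by (simp add: zy[symmetric] y_def[symmetric] inner_commute)
  have "0 \<le> y \<bullet> (S *v y)" using assms unfolding spd_def by (cases "y = 0") (auto intro: less_imp_le)
  then show "0 \<le> z \<bullet> (matrix_inv S *v z)" using e by simp
  assume "z \<bullet> (matrix_inv S *v z) = 0"
  then have "y = 0" using e assms unfolding spd_def by (metis less_irrefl)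
  then show "z = 0" using zy by simp
qed

lemma A_facts:
  fixes H :: "real^'d^'n" and S :: "real^'n^'n"
  assumes S: "spd S"
  defines "A \<equiv> transpose H ** matrix_inv S ** H"
  shows "transpose A = A" "0 \<le> x \<bullet> (A *v x)"
    "x \<bullet> (A *v x) = 0 \<Longrightarrow> H *v x = 0"
    "x \<bullet> (A *v x) = 0 \<Longrightarrow> A *v x = 0"
proof -
  show "transpose A = A" unfolding A_def
    by (simp add: matrix_transpose_mul spd_inv_sym[OF S] matrix_mul_assoc)
  have q: "x \<bullet> (A *v x) = (H *v x) \<bullet> (matrix_inv S *v (H *v x))"
    unfolding A_def matrix_vector_mul_assoc[symmetric] by (subst dot_transp) (simp only: transpose_transpose)
  show "0 \<le> x \<bullet> (A *v x)" unfolding q by (rule spd_inv_pos(1)[OF S])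
  show h: "x \<bullet> (A *v x) = 0 \<Longrightarrow> H *v x = 0" unfolding q by (rule spd_inv_pos(2)[OF S])
  show "x \<bullet> (A *v x) = 0 \<Longrightarrow> A *v x = 0"
    using h unfolding A_def by (simp add: matrix_vector_mul_assoc[symmetric])
qed

definition psd :: "real^'d^'d \<Rightarrow> bool" where
  "psd G \<longleftrightarrow> (\<forall>y. 0 \<le> y \<bullet> (G *v y))"

lemma K_inj:
  fixes A G :: "real^'d^'d"
  assumes psdG: "psd G" and Apsd: "\<And>x. 0 \<le> x \<bullet> (A *v x)"
    and Aker: "\<And>x. x \<bullet> (A *v x) = 0 \<Longrightarrow> A *v x = 0"
    and K0: "(mat 1 + G ** A) *v x = 0"
  shows "x = 0"
proof -
  have x: "x = - (G *v (A *v x))"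
    using K0 by (simp add: matrix_vector_mult_add_rdistrib matrix_vector_mul_assoc[symmetric] eq_neg_iff_add_eq_0)
  have "x \<bullet> (A *v x) = - ((A *v x) \<bullet> (G *v (A *v x)))"
    by (subst (1) x) (simp add: inner_commute)
  moreover have "0 \<le> (A *v x) \<bullet> (G *v (A *v x))" using psdG psd_def by blast
  ultimately have "x \<bullet> (A *v x) = 0" using Apsd[of x] by linarith
  then have "A *v x = 0" by (rule Aker)
  then show "x = 0" using x by simp
qed

lemma psd_step:
  fixes A G M :: "real^'d^'d"
  assumes psdG: "psd G" and Apsd: "\<And>x. 0 \<le> x \<bullet> (A *v x)"
    and KM: "(mat 1 + G ** A) ** M = mat 1"
  shows "psd (M ** G)"
  unfolding psd_def
proof
  fix y
  define z where "z = (M ** G) *v y"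
  have "(mat 1 + G ** A) *v z = G *v y"
    by (simp add: z_def matrix_vector_mul_assoc matrix_mul_assoc KM)
  then have zz: "z = G *v (y - A *v z)"
    by (simp add: matrix_vector_mult_add_rdistrib matrix_vector_mul_assoc[symmetric]
        matrix_vector_right_distrib algebra_simps)
  have "y \<bullet> z = (y - A *v z) \<bullet> z + (A *v z) \<bullet> z" by (simp add: inner_diff_left)
  also have "\<dots> = (y - A *v z) \<bullet> (G *v (y - A *v z)) + z \<bullet> (A *v z)"
    by (subst (1) zz) (simp add: inner_commute)
  finally have "y \<bullet> z = (y - A *v z) \<bullet> (G *v (y - A *v z)) + z \<bullet> (A *v z)" .
  moreover have "0 \<le> (y - A *v z) \<bullet> (G *v (y - A *v z))" using psdG psd_def by blast
  ultimately show "0 \<le> y \<bullet> ((M ** G) *v y)" using Apsd[of z] z_def by simp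
qed

lemma sym_step:
  fixes A G M :: "real^'d^'d"
  assumes Gs: "transpose G = G" and As: "transpose A = A"
    and KM: "(mat 1 + G ** A) ** M = mat 1" and MK: "M ** (mat 1 + G ** A) = mat 1"
  shows "transpose (M ** G) = M ** G"
proof -
  define K where "K = mat 1 + G ** A"
  have Kt: "transpose K = mat 1 + A ** G"
    by (simp add: K_def transpose_add' matrix_transpose_mul Gs As)
  have "K ** G = G ** (mat 1 + A ** G)"
    unfolding K_def by (simp add: mm_add_rdistrib matrix_add_ldistrib matrix_mul_assoc)
  then have KG: "K ** G = G ** transpose K" by (simp only: Kt)
  have G1: "G = M ** G ** transpose K"
    by (metis KG MK K_def matrix_mul_assoc matrix_mul_lid)
  have "G ** transpose M = M ** G ** transpose K ** transpose M"
    by (subst G1) simp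
  also have "\<dots> = M ** G ** transpose (M ** K)"
    by (simp add: matrix_transpose_mul matrix_mul_assoc)
  also have "\<dots> = M ** G" using MK K_def by simp
  finally show ?thesis by (simp add: matrix_transpose_mul Gs)
qed

lemma ec_mv: "emp_cov J v *v y = (1 / (real J - 1)) *\<^sub>R
   (\<Sum>j<J. ((v j - ens_mean J v) \<bullet> y) *\<^sub>R (v j - ens_mean J v))"
  by (simp add: emp_cov_def scaleR_matrix_vector_assoc[symmetric] sum_mv outer_mv)

lemma ec_quad: "y \<bullet> (emp_cov J v *v y) = (1 / (real J - 1)) *
   (\<Sum>j<J. ((v j - ens_mean J v) \<bullet> y)^2)"
  by (simp add: ec_mv inner_sum_right power2_eq_square inner_commute)

lemma ec_psd: "J \<ge> 2 \<Longrightarrow> psd (emp_cov J v)"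
  unfolding psd_def ec_quad by (auto intro!: divide_nonneg_pos sum_nonneg)

lemma ec_zero:
  assumes "J \<ge> 2" "y \<bullet> (emp_cov J v *v y) = 0"
  shows "emp_cov J v *v y = 0"
proof -
  have "real J - 1 > 0" using assms(1) by simp
  then have "(\<Sum>j<J. ((v j - ens_mean J v) \<bullet> y)^2) = 0" using assms(2) unfolding ec_quad by simp
  then have "\<forall>j\<in>{..<J}. ((v j - ens_mean J v) \<bullet> y)^2 = 0"
    by (subst (asm) sum_nonneg_eq_0_iff) auto
  then show ?thesis unfolding ec_mv by simp
qed

lemma ec_sym: "transpose (emp_cov J v) = emp_cov J v"
  by (simp add: emp_cov_def transpose_def outer_def vec_eq_iff sum_component mult.commute)

declare transpose_matrix_vector [simp del]

theorem proposition4p10: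
  fixes H :: "real^'d^'n" and Sig :: "real^'n^'n"
    and J :: nat and v :: "nat \<Rightarrow> real^'d"
    and w :: "nat \<Rightarrow> real^'n" and \<delta> :: "nat \<Rightarrow> nat \<Rightarrow> real"
    and h r :: nat
  defines "G \<equiv> Gseq H Sig (emp_cov J v)"
  defines "C \<equiv> (\<lambda>i. H ** G i ** transpose H)"
  defines "Hp \<equiv> pinv (transpose H ** matrix_inv Sig ** H) ** transpose H ** matrix_inv Sig"
  defines "u \<equiv> (\<lambda>l. if l < r then (1 / \<delta> l 0) *\<^sub>R ((G 0 ** transpose H) *v w l)
                     else Hp *v (Sig *v w l))"
  defines "A \<equiv> transpose H ** matrix_inv Sig ** H"
  defines "P \<equiv> (\<Sum>l<r. outer (u l) (u l)) ** A"
  defines "Q \<equiv> (\<Sum>l\<in>{r..<h}. outer (u l) (u l)) ** A"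
  defines "N \<equiv> mat 1 - P - Q"
  assumes rankH: "rank H = h"
    and Sig_spd: "spd Sig"
    and J2: "J \<ge> 2"
    and orth: "\<And>k l. k < CARD('n) \<Longrightarrow> l < CARD('n) \<Longrightarrow>
                 w k \<bullet> (Sig *v w l) = (if k = l then 1 else 0)"
    and eig: "\<And>i l. l < CARD('n) \<Longrightarrow> C i *v w l = \<delta> l i *\<^sub>R (Sig *v w l)"
    and r_le_h: "r \<le> h" and h_le_n: "h \<le> CARD('n)"
    and ran: "\<And>l. l < h \<Longrightarrow> w l \<in> range (\<lambda>x. (matrix_inv Sig ** H) *v x)"
    and pos: "\<And>l. l < r \<Longrightarrow> \<delta> l 0 > 0"
    and zero: "\<And>l. r \<le> l \<Longrightarrow> l < h \<Longrightarrow> \<delta> l 0 = 0"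
    and ker: "\<And>l. h \<le> l \<Longrightarrow> l < CARD('n) \<Longrightarrow> transpose H *v w l = 0"
    and r_def: "r = card {l. l < CARD('n) \<and> \<delta> l 0 > 0}"
  shows "\<forall>i. let M = Mmat H Sig (G i) in
           P ** M = M ** P \<and> Q ** M = M ** Q \<and> N ** M = M ** N \<and>
           P ** P = P \<and> Q ** Q = Q \<and> N ** N = N \<and>
           P ** Q = 0 \<and> Q ** P = 0 \<and> P ** N = 0 \<and> N ** P = 0 \<and>
           Q ** N = 0 \<and> N ** Q = 0 \<and>
           P + Q + N = mat 1"
proof -
  define Si where "Si = matrix_inv Sig"
  have SSi: "Sig ** Si = mat 1" and SiS: "Si ** Sig = mat 1"
    using spd_inv[OF Sig_spd] Si_def by auto
  have Hp': "Hp = pinv A ** transpose H ** Si" using Hp_def A_def Si_def by simp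
  have SiSv: "Si *v (Sig *v y) = y" for y by (simp add: matrix_vector_mul_assoc SiS)
  have A': "A = transpose H ** Si ** H" using A_def Si_def by simp
  have As: "transpose A = A" and Apsd: "\<And>x. 0 \<le> x \<bullet> (A *v x)"
    and AkerH: "\<And>x. x \<bullet> (A *v x) = 0 \<Longrightarrow> H *v x = 0"
    and Aker: "\<And>x. x \<bullet> (A *v x) = 0 \<Longrightarrow> A *v x = 0"
    using A_facts[OF Sig_spd, where H=H] A_def by auto
  define K where "K i = mat 1 + G i ** A" for i
  define M where "M i = Mmat H Sig (G i)" for i
  have MK': "M i = matrix_inv (K i)" for i
    by (simp add: M_def K_def Mmat_def A_def matrix_mul_assoc)
  have Gsucc: "G (Suc i) = M i ** G i" for i by (simp add: G_def M_def)
  have G0: "G 0 = emp_cov J v" by (simp add: G_def)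
  have Kinj_gen: "x = 0" if "psd (G i)" "K i *v x = 0" for i x
    using K_inj[of "G i" A x, OF that(1) Apsd Aker] that(2) by (simp add: K_def)
  have Gprop: "psd (G i) \<and> transpose (G i) = G i" for i
  proof (induction i)
    case 0 then show ?case unfolding G0 using ec_psd[OF J2, of v] ec_sym[of J v] by blast
  next
    case (Suc i)
    have inj: "\<And>x. K i *v x = 0 \<Longrightarrow> x = 0"
      using Kinj_gen Suc by blast
    have KM: "K i ** M i = mat 1" "M i ** K i = mat 1"
      using inv_of_ker[OF inj] MK' by auto
    show ?case using psd_step[of "G i" A "M i"] sym_step[of "G i" A "M i"] Suc Apsd As KM K_def Gsucc
      by auto
  qed
  have Kinj: "\<And>x. K i *v x = 0 \<Longrightarrow> x = 0" for i
    using Kinj_gen Gprop by blast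
  have KM: "K i ** M i = mat 1" "M i ** K i = mat 1" for i
    using inv_of_ker[OF Kinj] MK' by auto
  have Gsym: "transpose (G i) = G i" for i using Gprop by blast
  have Sw: "Sig *v w l \<noteq> 0" if "l < CARD('n)" for l
    using orth[OF that that] by auto
  define xx where "xx l = (SOME x. w l = (Si ** H) *v x)" for l
  have wx: "w l = Si *v (H *v xx l)" if "l < h" for l
  proof -
    have "\<exists>x. w l = (Si ** H) *v x" using ran[OF that] Si_def by auto
    then show ?thesis unfolding xx_def by (metis (mono_tags, lifting) someI_ex matrix_vector_mul_assoc)
  qed
  have HTw: "transpose H *v w l = A *v xx l" if "l < h" for l
    by (simp add: wx[OF that] A' matrix_vector_mul_assoc matrix_mul_assoc)
  have Sww: "Sig *v w l = H *v xx l" if "l < h" for l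
    by (simp add: wx[OF that] matrix_vector_mul_assoc matrix_mul_assoc SSi)
  have C0: "H *v (G 0 *v (transpose H *v w l)) = \<delta> l 0 *\<^sub>R (Sig *v w l)" if "l < CARD('n)" for l
    using eig[OF that, of 0] by (simp add: C_def matrix_vector_mul_assoc matrix_mul_assoc)
  have pinvA: "A ** pinv A ** A = A" using pinv_sym[OF As Apsd Aker] .
  have Au: "A *v u l = transpose H *v w l" if "l < h" for l
  proof (cases "l < r")
    case True
    have dpos: "\<delta> l 0 \<noteq> 0" using pos[OF True] by simp
    have "A *v u l = (1 / \<delta> l 0) *\<^sub>R (transpose H *v (Si *v (H *v (G 0 *v (transpose H *v w l)))))"
      using True by (simp add: u_def A' matrix_vector_mul_assoc[symmetric] matrix_vector_mult_scaleR)
    also have "\<dots> = transpose H *v w l"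
      using C0[of l] that h_le_n dpos
      by (simp add: matrix_vector_mult_scaleR SiSv)
    finally show ?thesis .
  next
    case False
    have "u l = pinv A *v (A *v xx l)"
      using False HTw[OF that] by (simp add: u_def Hp' matrix_vector_mul_assoc[symmetric] SiSv)
    then show ?thesis using HTw[OF that] pinvA by (simp add: matrix_vector_mul_assoc matrix_mul_assoc)
  qed
  have Hu: "H *v u l = Sig *v w l" if "l < h" for l
  proof (cases "l < r")
    case True
    have dpos: "\<delta> l 0 \<noteq> 0" using pos[OF True] by simp
    show ?thesis using True C0[of l] that h_le_n dpos
      by (simp add: u_def matrix_vector_mult_scaleR matrix_vector_mul_assoc)
  next
    case False
    have ul: "u l = pinv A *v (A *v xx l)"
      using False HTw[OF that] by (simp add: u_def Hp' matrix_vector_mul_assoc[symmetric] SiSv)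
    define p where "p = u l - xx l"
    have "A *v p = 0" using ul pinvA by (simp add: p_def matrix_vector_mul_assoc matrix_mul_assoc matrix_vector_mult_diff_distrib)
    then have "H *v p = 0" using AkerH by simp
    then show ?thesis using Sww[OF that] by (simp add: p_def matrix_vector_mult_diff_distrib)
  qed
  have dot_wu: "(transpose H *v w k) \<bullet> u l = (if k = l then 1 else 0)" if "k < h" "l < h" for k l
  proof -
    have "(transpose H *v w k) \<bullet> u l = w k \<bullet> (H *v u l)"
      by (simp add: dot_transp)
    also have "\<dots> = (if k = l then 1 else 0)" using Hu[OF that(2)] orth that h_le_n by simp
    finally show ?thesis .
  qed
  define Pr where "Pr I = (\<Sum>l\<in>I. outer (u l) (u l)) ** A" for I
  have Pr_mv: "Pr I *v x = (\<Sum>l\<in>I. ((transpose H *v w l) \<bullet> x) *\<^sub>R u l)" if "I \<subseteq> {..<h}" for I x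
    unfolding Pr_def proj_mv[OF As] using that by (intro sum.cong) (auto simp: Au)
  have PrPr: "Pr I ** Pr I' = Pr (I \<inter> I')" if "I \<subseteq> {..<h}" "I' \<subseteq> {..<h}" for I I'
  proof -
    have fin: "finite I" "finite I'" using that finite_subset by auto
    have "Pr I *v (Pr I' *v x) = Pr (I \<inter> I') *v x" for x
    proof -
      have "Pr I *v (Pr I' *v x) = (\<Sum>k\<in>I. (\<Sum>l\<in>I'. ((transpose H *v w l) \<bullet> x) * ((transpose H *v w k) \<bullet> u l)) *\<^sub>R u k)"
        by (simp add: Pr_mv that inner_sum_right)
      also have "\<dots> = (\<Sum>k\<in>I. (if k \<in> I' then (transpose H *v w k) \<bullet> x else 0) *\<^sub>R u k)"
      proof (rule sum.cong[OF refl])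
        fix k assume k: "k \<in> I"
        have "(\<Sum>l\<in>I'. ((transpose H *v w l) \<bullet> x) * ((transpose H *v w k) \<bullet> u l))
            = (\<Sum>l\<in>I'. if l = k then (transpose H *v w l) \<bullet> x else 0)"
          by (rule sum.cong[OF refl]) (use k that dot_wu in \<open>auto simp: subset_iff\<close>)
        also have "\<dots> = (if k \<in> I' then (transpose H *v w k) \<bullet> x else 0)"
          using fin by simp
        finally show "(\<Sum>l\<in>I'. ((transpose H *v w l) \<bullet> x) * ((transpose H *v w k) \<bullet> u l)) *\<^sub>R u k
           = (if k \<in> I' then (transpose H *v w k) \<bullet> x else 0) *\<^sub>R u k" by simp
      qed
      also have "\<dots> = (\<Sum>k\<in>I \<inter> I'. ((transpose H *v w k) \<bullet> x) *\<^sub>R u k)"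
        by (simp add: if_distrib[of "\<lambda>c. c *\<^sub>R _"] sum.inter_restrict[OF fin(1), symmetric] cong: if_cong)
      also have "\<dots> = Pr (I \<inter> I') *v x" using that by (subst Pr_mv) auto
      finally show ?thesis .
    qed
    then show ?thesis by (simp add: matrix_eq matrix_vector_mul_assoc)
  qed
  have u_ne: "u l \<noteq> 0" if "l < h" for l using Hu[OF that] Sw[of l] that h_le_n by auto
  have Gu: "\<forall>l<h. \<exists>c. G i *v (transpose H *v w l) = c *\<^sub>R u l" for i
  proof (induction i)
    case 0
    show ?case
    proof (intro allI impI)
      fix l assume l: "l < h"
      show "\<exists>c. G 0 *v (transpose H *v w l) = c *\<^sub>R u l"
      proof (cases "l < r")
        case True
        have dpos: "\<delta> l 0 \<noteq> 0" using pos[OF True] by simp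
        have "G 0 *v (transpose H *v w l) = \<delta> l 0 *\<^sub>R u l"
          using True dpos by (simp add: u_def matrix_vector_mul_assoc)
        then show ?thesis by blast
      next
        case False
        have "(transpose H *v w l) \<bullet> (G 0 *v (transpose H *v w l)) = w l \<bullet> (H *v (G 0 *v (transpose H *v w l)))"
          by (simp add: dot_transp)
        also have "\<dots> = 0" using C0[of l] l h_le_n zero[of l] False by simp
        finally have "G 0 *v (transpose H *v w l) = 0" using ec_zero[OF J2] G0 by simp
        then show ?thesis by (metis scale_zero_left)
      qed
    qed
  next
    case (Suc i)
    show ?case
    proof (intro allI impI)
      fix l assume l: "l < h"
      obtain c where c: "G i *v (transpose H *v w l) = c *\<^sub>R u l" using Suc l by blast
      have Ku: "K i *v u l = (1 + c) *\<^sub>R u l"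
        by (simp add: K_def matrix_vector_mult_add_rdistrib matrix_vector_mul_assoc[symmetric] Au[OF l] c
            scaleR_add_left)
      have c1: "1 + c \<noteq> 0"
      proof
        assume "1 + c = 0"
        then have "K i *v u l = 0" using Ku by simp
        then show False using Kinj u_ne[OF l] by blast
      qed
      have e1: "M i *v (K i *v u l) = u l" by (simp add: matrix_vector_mul_assoc KM)
      have e2: "(1 + c) *\<^sub>R (M i *v u l) = M i *v (K i *v u l)" by (simp only: Ku matrix_vector_mult_scaleR)
      have e: "(1 + c) *\<^sub>R (M i *v u l) = u l" using e1 e2 by simp
      have "M i *v u l = (1 / (1 + c)) *\<^sub>R ((1 + c) *\<^sub>R (M i *v u l))" using c1 by simp
      also have "\<dots> = (1 / (1 + c)) *\<^sub>R u l" by (simp only: e)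
      finally have Mu: "M i *v u l = (1 / (1 + c)) *\<^sub>R u l" .
      have "G (Suc i) *v (transpose H *v w l) = (c / (1 + c)) *\<^sub>R u l"
        by (simp add: Gsucc matrix_vector_mul_assoc[symmetric] c matrix_vector_mult_scaleR Mu)
      then show "\<exists>c. G (Suc i) *v (transpose H *v w l) = c *\<^sub>R u l" by blast
    qed
  qed
  have PrK: "Pr I ** K i = K i ** Pr I" if "I \<subseteq> {..<h}" for I i
  proof -
    have fin: "finite I" using that finite_subset by auto
    have "\<forall>l\<in>I. \<exists>c. G i *v (transpose H *v w l) = c *\<^sub>R u l"
    proof
      fix l assume "l \<in> I" then have "l < h" using that by auto
      then show "\<exists>c. G i *v (transpose H *v w l) = c *\<^sub>R u l" using Gu[of i] by simp
    qed
    from bchoice[OF this] obtain cf where cf': "\<forall>l\<in>I. G i *v (transpose H *v w l) = cf l *\<^sub>R u l"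
      by blast
    have cf: "G i *v (transpose H *v w l) = cf l *\<^sub>R u l" if "l \<in> I" for l using cf' that by blast
    have "Pr I *v (G i *v (A *v x)) = G i *v (A *v (Pr I *v x))" for x
    proof -
      have "Pr I *v (G i *v (A *v x)) = (\<Sum>l\<in>I. (cf l * ((transpose H *v w l) \<bullet> x)) *\<^sub>R u l)"
        unfolding Pr_mv[OF that]
      proof (rule sum.cong[OF refl])
        fix l assume l: "l \<in> I"
        have "(transpose H *v w l) \<bullet> (G i *v (A *v x)) = (G i *v (transpose H *v w l)) \<bullet> (A *v x)"
          by (rule sym_dot[OF Gsym])
        also have "\<dots> = cf l * ((A *v u l) \<bullet> x)" by (simp add: cf[OF l] sym_dot[OF As] matrix_vector_mult_scaleR)
        also have "\<dots> = cf l * ((transpose H *v w l) \<bullet> x)" using Au l that by auto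
        finally show "((transpose H *v w l) \<bullet> (G i *v (A *v x))) *\<^sub>R u l = (cf l * ((transpose H *v w l) \<bullet> x)) *\<^sub>R u l"
          by simp
      qed
      also have "\<dots> = G i *v (A *v (Pr I *v x))"
        unfolding Pr_mv[OF that]
        using that by (auto simp add: linear_sum[OF matrix_vector_mul_linear] o_def matrix_vector_mult_scaleR
            Au cf subset_iff intro!: sum.cong)
      finally show ?thesis .
    qed
    then have "Pr I ** (G i ** A) = (G i ** A) ** Pr I"
      by (simp add: matrix_eq matrix_vector_mul_assoc matrix_mul_assoc)
    then show ?thesis by (simp add: K_def matrix_add_ldistrib mm_add_rdistrib)
  qed
  have PrM: "Pr I ** M i = M i ** Pr I" if "I \<subseteq> {..<h}" for I i
  proof -
    have "M i ** Pr I = M i ** Pr I ** (K i ** M i)" by (simp add: KM)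
    also have "\<dots> = M i ** (K i ** Pr I) ** M i" by (metis PrK[OF that] matrix_mul_assoc)
    also have "\<dots> = Pr I ** M i" by (simp add: matrix_mul_assoc KM)
    finally show ?thesis by simp
  qed
  have P': "P = Pr {..<r}" and Q': "Q = Pr {r..<h}" by (simp_all add: P_def Q_def Pr_def)
  have sR: "{..<r} \<subseteq> {..<h}" and sQ: "{r..<h} \<subseteq> {..<h}" using r_le_h by auto
  have Pr0: "Pr {} = 0" by (simp add: Pr_def)
  have disj: "{..<r} \<inter> {r..<h} = {}" "{r..<h} \<inter> {..<r} = {}" by auto
  have PP: "P ** P = P" using PrPr[OF sR sR] P' by simp
  have QQ: "Q ** Q = Q" using PrPr[OF sQ sQ] Q' by simp
  have PQ: "P ** Q = 0" using PrPr[OF sR sQ] P' Q' Pr0 disj by simp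
  have QP: "Q ** P = 0" using PrPr[OF sQ sR] P' Q' Pr0 disj by simp
  have NP: "N ** P = 0" by (simp add: N_def mm_diff_rdistrib PP QP)
  have NQ: "N ** Q = 0" by (simp add: N_def mm_diff_rdistrib PQ QQ)
  have PN: "P ** N = 0" by (simp add: N_def mm_diff_ldistrib PP PQ)
  have QN: "Q ** N = 0" by (simp add: N_def mm_diff_ldistrib QP QQ)
  have NN: "N ** N = N"
  proof -
    have "N ** N = N ** mat 1 - N ** P - N ** Q" by (simp add: N_def mm_diff_ldistrib)
    then show ?thesis using NP NQ by simp
  qed
  show ?thesis
  proof
    fix i
    have PM: "P ** M i = M i ** P" using PrM[OF sR] P' by simp
    have QM: "Q ** M i = M i ** Q" using PrM[OF sQ] Q' by simp
    have NM: "N ** M i = M i ** N"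
      by (simp add: N_def mm_diff_ldistrib mm_diff_rdistrib PM QM)
    show "let M = Mmat H Sig (G i) in
           P ** M = M ** P \<and> Q ** M = M ** Q \<and> N ** M = M ** N \<and>
           P ** P = P \<and> Q ** Q = Q \<and> N ** N = N \<and>
           P ** Q = 0 \<and> Q ** P = 0 \<and> P ** N = 0 \<and> N ** P = 0 \<and>
           Q ** N = 0 \<and> N ** Q = 0 \<and>
           P + Q + N = mat 1"
      unfolding Let_def M_def[symmetric]
      using PM QM NM PP QQ NN PQ QP PN NP QN NQ by (simp add: N_def)
  qed
qed

end
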